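(* Let $q$ be a prime power, $\beta$ a primitive element of $\mathbb{F}_{q^2}$, $\mathrm{Tr}(x)=x+x^q$, and $\Psi:\mathbb{F}_{q^2}^n\to\mathbb{F}_q^{2n}$, $\Psi(\alpha_0,\ldots,\alpha_{n-1})=\left(\mathrm{Tr}(\beta\alpha_0),\ldots,\mathrm{Tr}(\beta\alpha_{n-1}),\mathrm{Tr}(\beta^q\alpha_0),\ldots,\mathrm{Tr}(\beta^q\alpha_{n-1})\right)$. Let $\mathscr{C}$ be an $\mathbb{F}_q$-linear additive conjucyclic code of length $n$ over $\mathbb{F}_{q^2}$, $\mathscr{D}=\Psi(\mathscr{C})$, and $\mathcal{H}(\mathscr{C})$ the largest $q$-ary cyclic code contained in $\mathscr{C}$. Then for any $\vec{d}=(d_0,\ldots,d_{2n-1})\in\mathscr{D}$, $\vec{d}\in\Psi(\mathcal{H}(\mathscr{C}))$ if and only if $d_i=d_{n+i}$ for all $0\leq i\leq n-1$.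
   Context: An $\mathbb{F}_q$-linear additive code of length $n$ over $\mathbb{F}_{q^2}$ is an $\mathbb{F}_q$-subspace of $\mathbb{F}_{q^2}^n$; it is conjucyclic if closed under $T(c_0,\ldots,c_{n-1})=(c_{n-1}^q,c_0,\ldots,c_{n-2})$. A $q$-ary cyclic code of length $n$ is an $\mathbb{F}_q$-subspace of $\mathbb{F}_q^n$ closed under the cyclic shift $(c_0,\ldots,c_{n-1})\mapsto(c_{n-1},c_0,\ldots,c_{n-2})$; here $\mathbb{F}_q^n\subseteq\mathbb{F}_{q^2}^n$. *)

theory Defs
  imports "HOL-Computational_Algebra.Primes"
begin

text \<open>Ambient field F_{q^2} is a finite field type 'a with CARD('a) = q^2.
  The subfield F_q is the fixed field of the Frobenius x \<mapsto> x^q.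
  Vectors of length n are lists of length n.\<close>

definition prime_power :: "nat \<Rightarrow> bool" where
  "prime_power q \<longleftrightarrow> (\<exists>p k. prime p \<and> k > 0 \<and> q = p ^ k)"

definition Fq :: "nat \<Rightarrow> 'a::field set" where
  "Fq q = {x. x ^ q = x}"

definition primitive_element :: "'a::{finite,field} \<Rightarrow> bool" where
  "primitive_element b \<longleftrightarrow> b \<noteq> 0 \<and> (\<forall>x. x \<noteq> 0 \<longrightarrow> (\<exists>k::nat. x = b ^ k))"

definition Tr :: "nat \<Rightarrow> 'a::field \<Rightarrow> 'a" where
  "Tr q x = x + x ^ q"

definition vadd :: "'a::field list \<Rightarrow> 'a list \<Rightarrow> 'a list" where
  "vadd u v = map2 (+) u v"

definition vscale :: "'a::field \<Rightarrow> 'a list \<Rightarrow> 'a list" where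
  "vscale a v = map (\<lambda>x. a * x) v"

definition Fq_linear_code :: "nat \<Rightarrow> nat \<Rightarrow> 'a::field list set \<Rightarrow> bool" where
  "Fq_linear_code q n C \<longleftrightarrow>
     (\<forall>c\<in>C. length c = n) \<and> replicate n 0 \<in> C \<and>
     (\<forall>u\<in>C. \<forall>v\<in>C. vadd u v \<in> C) \<and>
     (\<forall>a\<in>Fq q. \<forall>v\<in>C. vscale a v \<in> C)"

definition conj_shift :: "nat \<Rightarrow> 'a::field list \<Rightarrow> 'a list" where
  "conj_shift q c = (last c) ^ q # butlast c"

definition conjucyclic_code :: "nat \<Rightarrow> nat \<Rightarrow> 'a::field list set \<Rightarrow> bool" where
  "conjucyclic_code q n C \<longleftrightarrow> Fq_linear_code q n C \<and> (\<forall>c\<in>C. conj_shift q c \<in> C)"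

definition cyc_shift :: "'a list \<Rightarrow> 'a list" where
  "cyc_shift c = last c # butlast c"

definition qary_cyclic_code :: "nat \<Rightarrow> nat \<Rightarrow> 'a::field list set \<Rightarrow> bool" where
  "qary_cyclic_code q n D \<longleftrightarrow> Fq_linear_code q n D \<and>
     (\<forall>c\<in>D. set c \<subseteq> Fq q) \<and> (\<forall>c\<in>D. cyc_shift c \<in> D)"

definition H_code :: "nat \<Rightarrow> nat \<Rightarrow> 'a::field list set \<Rightarrow> 'a list set" where
  "H_code q n C = (THE D. qary_cyclic_code q n D \<and> D \<subseteq> C \<and>
      (\<forall>D'. qary_cyclic_code q n D' \<and> D' \<subseteq> C \<longrightarrow> D' \<subseteq> D))"

definition Psi :: "nat \<Rightarrow> 'a::field \<Rightarrow> 'a list \<Rightarrow> 'a list" where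
  "Psi q b v = map (\<lambda>a. Tr q (b * a)) v @ map (\<lambda>a. Tr q (b ^ q * a)) v"

end

theory Submission
  imports Defs "HOL-Number_Theory.Number_Theory"
begin

lemma pow_card_same:
  fixes x :: "'a :: {finite, field}"
  shows "x ^ card (UNIV :: 'a set) = x"
proof (cases "x = 0")
  case False
  have "x * (\<Prod>y\<in>UNIV-{0}. x * y) = x * x ^ (card (UNIV :: 'a set) - 1) * \<Prod>(UNIV-{0})"
    by (simp add: prod.distrib mult_ac)
  also have "x * x ^ (card (UNIV :: 'a set) - 1) = x ^ Suc (card (UNIV :: 'a set) - 1)"
    by (subst power_Suc) auto
  also have "Suc (card (UNIV :: 'a set) - 1) = card (UNIV :: 'a set)"
    using finite_UNIV_card_ge_0[where ?'a = 'a] by simp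
  also have "(\<Prod>y\<in>UNIV-{0}. x * y) = (\<Prod>y\<in>UNIV-{0}. y)"
    by (rule prod.reindex_bij_witness[of _ "\<lambda>y. y / x" "\<lambda>y. x * y"]) (use False in auto)
  finally show ?thesis
    by simp
qed (use finite_UNIV_card_ge_0[where ?'a = 'a] in auto)

lemma frob_add:
  fixes x y :: "'a :: {finite, field}"
  assumes "prime_power q" and "card (UNIV :: 'a set) = q ^ 2"
  shows "(x + y) ^ q = x ^ q + y ^ q"
proof -
  obtain p k where pk: "prime p" "k > 0" "q = p ^ k"
    using assms(1) unfolding prime_power_def by blast
  have cpos: "CHAR('a) > 0" by (rule finite_imp_CHAR_pos) simp
  have cp: "prime CHAR('a)" using prime_CHAR_semidom[OF cpos] .
  have "CHAR('a) dvd card (UNIV :: 'a set)" by (rule CHAR_dvd_CARD)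
  hence "CHAR('a) dvd p ^ (k * 2)" using assms(2) pk by (simp add: power_mult)
  hence "CHAR('a) dvd p" using cp prime_dvd_power by blast
  hence "CHAR('a) = p" using cp pk(1) primes_dvd_imp_eq by blast
  thus ?thesis using freshmans_dream'[OF cp, of q k] pk by simp
qed

lemma q_ge2:
  assumes "prime_power q" shows "q \<ge> 2"
proof -
  obtain p k where pk: "prime p" "k > 0" "q = p ^ k"
    using assms unfolding prime_power_def by blast
  have "p \<ge> 2" using pk(1) prime_ge_2_nat by blast
  have "p ^ 1 \<le> p ^ k" using pk(2) \<open>p \<ge> 2\<close> by (intro power_increasing) auto
  thus ?thesis using pk \<open>p \<ge> 2\<close> by simp
qed

lemma beta_not_Fq:
  fixes \<beta> :: "'a :: {finite, field}"
  assumes "prime_power q" and "card (UNIV :: 'a set) = q ^ 2"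
    and "primitive_element \<beta>"
  shows "\<beta> ^ q \<noteq> \<beta>"
proof
  assume h: "\<beta> ^ q = \<beta>"
  have q2: "q \<ge> 2" using q_ge2[OF assms(1)] .
  have b0: "\<beta> \<noteq> 0" using assms(3) unfolding primitive_element_def by blast
  have "\<beta> ^ q = \<beta> * \<beta> ^ (q - 1)" using q2 by (metis Suc_diff_1 not_numeral_le_zero not_gr0 power_Suc)
  hence b1: "\<beta> ^ (q - 1) = 1" using h b0 by simp
  have pk: "\<beta> ^ k = \<beta> ^ (k mod (q - 1))" for k
  proof -
    have "\<beta> ^ k = \<beta> ^ ((q - 1) * (k div (q - 1)) + k mod (q - 1))" by simp
    also have "\<dots> = (\<beta> ^ (q - 1)) ^ (k div (q - 1)) * \<beta> ^ (k mod (q - 1))"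
      by (simp only: power_add power_mult)
    finally show ?thesis using b1 by simp
  qed
  have "UNIV \<subseteq> insert 0 ((\<lambda>k. \<beta> ^ k) ` {..<q - 1})"
  proof
    fix x :: 'a
    show "x \<in> insert 0 ((\<lambda>k. \<beta> ^ k) ` {..<q - 1})"
    proof (cases "x = 0")
      case False
      then obtain k where "x = \<beta> ^ k" using assms(3) unfolding primitive_element_def by blast
      hence "x = \<beta> ^ (k mod (q - 1))" using pk by simp
      moreover have "k mod (q - 1) < q - 1" using q2 by simp
      ultimately show ?thesis by blast
    qed simp
  qed
  hence "card (UNIV :: 'a set) \<le> card (insert 0 ((\<lambda>k. \<beta> ^ k) ` {..<q - 1}))"
    by (intro card_mono) auto
  also have "\<dots> \<le> Suc (card ((\<lambda>k. \<beta> ^ k) ` {..<q - 1}))" by (rule card_insert_le_m1) auto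
  also have "\<dots> \<le> Suc (q - 1)" using card_image_le[of "{..<q - 1}" "\<lambda>k. \<beta> ^ k"] by simp
  also have "\<dots> = q" using q2 by simp
  finally have "q ^ 2 \<le> q" using assms(2) by simp
  moreover have "q * 2 \<le> q * q" using q2 by simp
  ultimately show False using q2 by (simp add: power2_eq_square)
qed

lemma Tr_eq_iff:
  fixes \<beta> a :: "'a :: {finite, field}"
  assumes "prime_power q" and "card (UNIV :: 'a set) = q ^ 2"
    and "primitive_element \<beta>"
  shows "Tr q (\<beta> * a) = Tr q (\<beta> ^ q * a) \<longleftrightarrow> a ^ q = a"
proof -
  have bb: "\<beta> ^ q ^ 2 = \<beta>" using pow_card_same[of \<beta>] assms(2) by simp
  have "(\<beta> ^ q) ^ q = \<beta>" using bb by (simp add: power_mult[symmetric] power2_eq_square)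
  hence "Tr q (\<beta> * a) - Tr q (\<beta> ^ q * a) = (\<beta> - \<beta> ^ q) * (a - a ^ q)"
    unfolding Tr_def by (simp add: power_mult_distrib algebra_simps)
  moreover have "\<beta> - \<beta> ^ q \<noteq> 0" using beta_not_Fq[OF assms] by simp
  ultimately show ?thesis by (metis eq_iff_diff_eq_0 mult_eq_0_iff)
qed

theorem theorem3p14:
  fixes q n :: nat and \<beta> :: "'a::{finite,field}" and C :: "'a list set" and d :: "'a list"
  assumes "prime_power q"
    and "card (UNIV :: 'a set) = q ^ 2"
    and "primitive_element \<beta>"
    and "conjucyclic_code q n C"
    and "d \<in> Psi q \<beta> ` C"
  shows "d \<in> Psi q \<beta> ` H_code q n C \<longleftrightarrow> (\<forall>i<n. d ! i = d ! (n + i))"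
proof -
  have q2: "q \<ge> 2" using q_ge2[OF assms(1)] .
  have lin: "Fq_linear_code q n C" and cs: "\<And>c. c \<in> C \<Longrightarrow> conj_shift q c \<in> C"
    using assms(4) unfolding conjucyclic_code_def by auto
  have lenC: "\<And>c. c \<in> C \<Longrightarrow> length c = n" using lin unfolding Fq_linear_code_def by auto
  have n0: "n > 0"
  proof (rule ccontr)
    assume "\<not> n > 0"
    hence "[] \<in> C" using lin unfolding Fq_linear_code_def by auto
    hence "conj_shift q [] \<in> C" using cs by blast
    thus False using lenC \<open>\<not> n > 0\<close> unfolding conj_shift_def by fastforce
  qed
  define H0 where "H0 = {c \<in> C. set c \<subseteq> Fq q}"
  have addF: "x + y \<in> Fq q" if "x \<in> Fq q" "y \<in> Fq q" for x y :: 'a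
    using that frob_add[OF assms(1,2)] unfolding Fq_def by simp
  have H0q: "qary_cyclic_code q n H0"
    unfolding qary_cyclic_code_def Fq_linear_code_def
  proof (intro conjI ballI)
    fix c assume "c \<in> H0" thus "length c = n" using lenC H0_def by auto
  next
    show "replicate n 0 \<in> H0" using lin q2 unfolding H0_def Fq_linear_code_def Fq_def by auto
  next
    fix u v assume u: "u \<in> H0" and v: "v \<in> H0"
    have "vadd u v \<in> C" using u v lin unfolding H0_def Fq_linear_code_def by auto
    moreover have "set (vadd u v) \<subseteq> Fq q"
    proof
      fix z assume "z \<in> set (vadd u v)"
      then obtain x y where "(x, y) \<in> set (zip u v)" "z = x + y" unfolding vadd_def by auto
      hence "x \<in> set u" "y \<in> set v" "z = x + y" by (auto dest: set_zip_leftD set_zip_rightD)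
      thus "z \<in> Fq q" using u v addF unfolding H0_def by blast
    qed
    ultimately show "vadd u v \<in> H0" unfolding H0_def by simp
  next
    fix a :: 'a and v assume a: "a \<in> Fq q" and v: "v \<in> H0"
    have "vscale a v \<in> C" using a v lin unfolding H0_def Fq_linear_code_def by auto
    moreover have "set (vscale a v) \<subseteq> Fq q"
      using a v unfolding H0_def vscale_def Fq_def by (auto simp: power_mult_distrib)
    ultimately show "vscale a v \<in> H0" unfolding H0_def by simp
  next
    fix c assume "c \<in> H0" thus "set c \<subseteq> Fq q" unfolding H0_def by simp
  next
    fix c assume c: "c \<in> H0"
    have ne: "c \<noteq> []" using c lenC n0 unfolding H0_def by fastforce
    hence lc: "last c \<in> Fq q" using c unfolding H0_def by auto
    hence "cyc_shift c = conj_shift q c" unfolding cyc_shift_def conj_shift_def Fq_def by simp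
    hence "cyc_shift c \<in> C" using c cs unfolding H0_def by simp
    moreover have "set (cyc_shift c) \<subseteq> Fq q"
      using c lc unfolding H0_def cyc_shift_def by (auto dest: in_set_butlastD)
    ultimately show "cyc_shift c \<in> H0" unfolding H0_def by simp
  qed
  have Hmax: "\<And>D'. qary_cyclic_code q n D' \<and> D' \<subseteq> C \<longrightarrow> D' \<subseteq> H0"
    unfolding H0_def qary_cyclic_code_def by blast
  have HH: "H_code q n C = H0"
    unfolding H_code_def
  proof (rule the_equality)
    show "qary_cyclic_code q n H0 \<and> H0 \<subseteq> C \<and> (\<forall>D'. qary_cyclic_code q n D' \<and> D' \<subseteq> C \<longrightarrow> D' \<subseteq> H0)"
      using H0q Hmax unfolding H0_def by auto
  next
    fix D assume "qary_cyclic_code q n D \<and> D \<subseteq> C \<and> (\<forall>D'. qary_cyclic_code q n D' \<and> D' \<subseteq> C \<longrightarrow> D' \<subseteq> D)"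
    thus "D = H0" using H0q Hmax[of D] unfolding H0_def by auto
  qed
  have idx: "Psi q \<beta> c ! i = Tr q (\<beta> * c ! i) \<and> Psi q \<beta> c ! (n + i) = Tr q (\<beta> ^ q * c ! i)"
    if "length c = n" "i < n" for c i
    using that unfolding Psi_def by (simp add: nth_append)
  have key: "(\<forall>i<n. Psi q \<beta> c ! i = Psi q \<beta> c ! (n + i)) \<longleftrightarrow> set c \<subseteq> Fq q"
    if "length c = n" for c
  proof -
    have "(\<forall>i<n. Psi q \<beta> c ! i = Psi q \<beta> c ! (n + i)) \<longleftrightarrow> (\<forall>i<n. c ! i ^ q = c ! i)"
      using idx[OF that] Tr_eq_iff[OF assms(1,2,3)] by simp
    also have "\<dots> \<longleftrightarrow> set c \<subseteq> Fq q"
      using that unfolding Fq_def by (auto simp: in_set_conv_nth subset_iff)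
    finally show ?thesis .
  qed
  obtain c where c: "c \<in> C" "d = Psi q \<beta> c" using assms(5) by blast
  show ?thesis
  proof
    assume "d \<in> Psi q \<beta> ` H_code q n C"
    then obtain h where "h \<in> H0" "d = Psi q \<beta> h" using HH by blast
    thus "\<forall>i<n. d ! i = d ! (n + i)" using key[of h] lenC unfolding H0_def by auto
  next
    assume "\<forall>i<n. d ! i = d ! (n + i)"
    hence "c \<in> H0" using key[of c] c lenC unfolding H0_def by auto
    thus "d \<in> Psi q \<beta> ` H_code q n C" using HH c by blast
  qed
qed

end
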